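(* Let $d\ge2$, $T>0$ and let $h_T\in L^2_{\mathrm{loc}}(\mathbb{Z}^d)$ be such that for all $R\gg1$, \[ \text{for } d=2:\ \sum_{R<|z|\le2R}h_T^2(z)\lesssim\min\{1,\sqrt T R^{-1}\}^2,\qquad\text{for } d>2:\ \sum_{R<|z|\le2R}h_T^2(z)\lesssim R^{2-d}, \] and for $R\sim1$ (and all $d\ge2$), $\sum_{|z|\le R}h_T^2(z)\lesssim1$. Then for $R\gg1$, \[ \text{for } d=2:\ \sum_{|x|\le R}\sum_{z\in\mathbb{Z}^d}h_T(z)h_T(z-x)\lesssim R^2\max\{1,\ln(\sqrt T R^{-1})\},\qquad \text{for } d>2:\ \sum_{|x|\le R}\sum_{z\in\mathbb{Z}^d}h_T(z)h_T(z-x)\lesssim R^2. \]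
   Context: Sums over regions are over lattice points of $\mathbb{Z}^d$. $X\lesssim Y$ means $X\le CY$ with a constant $C$ independent of $R$ and $T$ (the constant in the conclusion depends on $d$ and on the constants in the hypotheses); $R\gg1$ means $R\ge R_0$ for such a constant, and $R\sim1$ means $R$ is of order one. *)

theory Defs
  imports "HOL-Analysis.Analysis"
begin

text \<open>Euclidean norm of a lattice point of Z^d, where d = CARD('n).\<close>
definition znorm :: "int ^ 'n \<Rightarrow> real" where
  "znorm z = norm ((\<chi> i. real_of_int (z $ i)) :: real ^ 'n)"

end

theory Submission imports Defs "HOL-Library.FuncSet" begin

definition emb :: "int ^ 'n \<Rightarrow> real ^ 'n" where "emb z = (\<chi> i. real_of_int (z $ i))"

lemma znorm_emb: "znorm z = norm (emb z)" by (simp add: znorm_def emb_def)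
lemma emb_diff: "emb (z - x) = emb z - emb x" by (simp add: emb_def vec_eq_iff)

lemma znorm_nonneg: "0 \<le> znorm z" by (simp add: znorm_emb)
lemma znorm_diff_le: "znorm (z - x) \<le> znorm z + znorm x"
  by (simp add: znorm_emb emb_diff norm_triangle_ineq4)
lemma znorm_le_diff: "znorm z \<le> znorm (z - x) + znorm x"
  using norm_triangle_ineq[of "emb z - emb x" "emb x"] by (simp add: znorm_emb emb_diff)
lemma comp_le_znorm: "\<bar>real_of_int (z $ i)\<bar> \<le> znorm z"
  using component_le_norm_cart[of "emb z" i] by (simp add: znorm_emb emb_def)

lemma box_card:
  fixes m :: int
  shows "{z :: int ^ 'n. \<forall>i. z $ i \<in> {-m..m}} = vec_lambda ` (PiE UNIV (\<lambda>_. {-m..m}))"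
    and "card {z :: int ^ 'n. \<forall>i. z $ i \<in> {-m..m}} = card {-m..m} ^ CARD('n)"
    and "finite {z :: int ^ 'n. \<forall>i. z $ i \<in> {-m..m}}"
proof -
  show 1: "{z :: int ^ 'n. \<forall>i. z $ i \<in> {-m..m}} = vec_lambda ` (PiE UNIV (\<lambda>_. {-m..m}))"
  proof (rule set_eqI, rule iffI)
    fix z :: "int ^ 'n" assume "z \<in> {z. \<forall>i. z $ i \<in> {-m..m}}"
    then have "z = vec_lambda (vec_nth z)" "vec_nth z \<in> PiE UNIV (\<lambda>_. {-m..m})" by auto
    then show "z \<in> vec_lambda ` (PiE UNIV (\<lambda>_. {-m..m}))" by blast
  qed auto
  have inj: "inj_on vec_lambda (PiE UNIV (\<lambda>_. {-m..m::int}) :: ('n \<Rightarrow> int) set)"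
    by (auto simp: inj_on_def vec_lambda_inject)
  show "card {z :: int ^ 'n. \<forall>i. z $ i \<in> {-m..m}} = card {-m..m} ^ CARD('n)"
    unfolding 1 using card_image[OF inj] by (simp add: card_PiE)
  show "finite {z :: int ^ 'n. \<forall>i. z $ i \<in> {-m..m}}"
    unfolding 1 by (intro finite_imageI finite_PiE) auto
qed


lemma ball_card:
  assumes "0 \<le> \<rho>"
  shows "finite {z :: int ^ 'n. znorm z \<le> \<rho>}"
    and "real (card {z :: int ^ 'n. znorm z \<le> \<rho>}) \<le> (2*\<rho>+1) ^ CARD('n)"
proof -
  define m where "m = floor \<rho>"
  have sub: "{z :: int ^ 'n. znorm z \<le> \<rho>} \<subseteq> {z :: int ^ 'n. \<forall>i. z $ i \<in> {-m..m}}"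
  proof
    fix z :: "int ^ 'n" assume "z \<in> {z. znorm z \<le> \<rho>}"
    then have h: "\<bar>real_of_int (z $ i)\<bar> \<le> \<rho>" for i using comp_le_znorm[of z i] by auto
    have "z $ i \<le> m \<and> - (z $ i) \<le> m" for i
      unfolding m_def le_floor_iff using h[of i] by (auto simp: abs_le_iff)
    then have "-m \<le> z $ i \<and> z $ i \<le> m" for i by (metis minus_le_iff)
    then show "z \<in> {z. \<forall>i. z $ i \<in> {-m..m}}" by simp
  qed
  show fin: "finite {z :: int ^ 'n. znorm z \<le> \<rho>}" using finite_subset[OF sub box_card(3)] .
  have c1: "card {z :: int ^ 'n. znorm z \<le> \<rho>} \<le> card {-m..m} ^ CARD('n)"
    using card_mono[OF box_card(3) sub] box_card(2) by metis
  have "0 \<le> m" using assms m_def by simp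
  have c2: "card {-m..m} = nat (2*m+1)" by simp
  have "real (card {z :: int ^ 'n. znorm z \<le> \<rho>}) \<le> real (nat (2*m+1)) ^ CARD('n)"
    using c1 c2 by (metis of_nat_le_iff of_nat_power)
  also have "real (nat (2*m+1)) = real_of_int (2*m+1)" using \<open>0 \<le> m\<close> by simp
  also have "(real_of_int (2*m+1)) ^ CARD('n) \<le> (2*\<rho>+1) ^ CARD('n)"
    using \<open>0 \<le> m\<close> by (intro power_mono) (auto simp: m_def)
  finally show "real (card {z :: int ^ 'n. znorm z \<le> \<rho>}) \<le> (2*\<rho>+1) ^ CARD('n)" .
qed


lemma shell_split:
  assumes "0 \<le> \<rho>"
  shows "{z :: int ^ 'n. znorm z \<le> 2*\<rho>} = {z. znorm z \<le> \<rho>} \<union> {z. \<rho> < znorm z \<and> znorm z \<le> 2*\<rho>}"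
    and "{z :: int ^ 'n. znorm z \<le> \<rho>} \<inter> {z. \<rho> < znorm z \<and> znorm z \<le> 2*\<rho>} = {}"
    and "finite {z :: int ^ 'n. \<rho> < znorm z \<and> znorm z \<le> 2*\<rho>}"
  using assms by (auto intro: finite_subset[OF _ ball_card(1)[of "2*\<rho>"]])

lemma ball_sum_bound:
  fixes a :: "int ^ 'n \<Rightarrow> real"
  assumes R0: "0 < R0" and K: "0 \<le> K" and a: "\<And>z. 0 \<le> a z"
    and sh: "\<And>\<rho>. R0 \<le> \<rho> \<Longrightarrow> (\<Sum>z\<in>{z. \<rho> < znorm z \<and> znorm z \<le> 2*\<rho>}. a z) \<le> K*\<rho>"
    and \<rho>: "0 \<le> \<rho>"
  shows "(\<Sum>z\<in>{z. znorm z \<le> \<rho>}. a z) \<le> 2*K*\<rho> + (\<Sum>z\<in>{z. znorm z \<le> 2*R0}. a z)"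
proof -
  define A0 where "A0 = (\<Sum>z\<in>{z. znorm z \<le> 2*R0}. a z)"
  have P: "\<forall>\<rho>. 0 \<le> \<rho> \<longrightarrow> \<rho> \<le> 2^n*(2*R0) \<longrightarrow> (\<Sum>z\<in>{z. znorm z \<le> \<rho>}. a z) \<le> 2*K*\<rho> + A0" for n
  proof (induction n)
    case 0
    show ?case
    proof (intro allI impI)
      fix \<rho> :: real assume h: "0 \<le> \<rho>" "\<rho> \<le> 2^0*(2*R0)"
      have "(\<Sum>z\<in>{z. znorm z \<le> \<rho>}. a z) \<le> A0" unfolding A0_def
        using h R0 by (intro sum_mono2 ball_card(1)) (auto simp: a)
      then show "(\<Sum>z\<in>{z. znorm z \<le> \<rho>}. a z) \<le> 2*K*\<rho> + A0" using h K by (smt (verit) mult_nonneg_nonneg)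
    qed
  next
    case (Suc n)
    show ?case
    proof (intro allI impI)
      fix \<rho> :: real assume h: "0 \<le> \<rho>" "\<rho> \<le> 2^Suc n*(2*R0)"
      show "(\<Sum>z\<in>{z. znorm z \<le> \<rho>}. a z) \<le> 2*K*\<rho> + A0"
      proof (cases "\<rho> \<le> 2^n*(2*R0)")
        case True then show ?thesis using Suc.IH h by blast
      next
        case False
        have "1 \<le> (2::real)^n" by simp
        then have "2*R0 \<le> 2^n*(2*R0)" using R0 by (simp add: mult_le_cancel_right1)
        then have r1: "R0 \<le> \<rho>/2" using False by linarith
        have r2: "\<rho>/2 \<le> 2^n*(2*R0)" using h by simp
        have eq: "{z :: int ^ 'n. znorm z \<le> \<rho>} = {z. znorm z \<le> \<rho>/2} \<union> {z. \<rho>/2 < znorm z \<and> znorm z \<le> 2*(\<rho>/2)}"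
          using shell_split(1)[of "\<rho>/2"] h by simp
        have "(\<Sum>z\<in>{z. znorm z \<le> \<rho>}. a z) = (\<Sum>z\<in>{z. znorm z \<le> \<rho>/2}. a z) + (\<Sum>z\<in>{z. \<rho>/2 < znorm z \<and> znorm z \<le> 2*(\<rho>/2)}. a z)"
          unfolding eq using h by (intro sum.union_disjoint ball_card(1) shell_split(3)) auto
        also have "\<dots> \<le> (2*K*(\<rho>/2) + A0) + K*(\<rho>/2)"
          using Suc.IH[rule_format, of "\<rho>/2"] r2 h sh[OF r1] by (intro add_mono) auto
        also have "\<dots> \<le> 2*K*\<rho> + A0" using K h by (simp add: algebra_simps)
        finally show ?thesis .
      qed
    qed
  qed
  obtain n where "\<rho> / (2*R0) < 2^n" using real_arch_pow[of 2 "\<rho> / (2*R0)"] by auto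
  then have "\<rho> < 2^n * (2*R0)" using R0 by (simp add: divide_less_eq)
  then show ?thesis using P[of n] \<rho> R0 unfolding A0_def by auto
qed


lemma tail_bound:
  fixes f :: "int ^ 'n \<Rightarrow> real"
  assumes R0: "0 < R0" and f: "\<And>z. 0 \<le> f z"
    and sh: "\<And>\<rho>. R0 \<le> \<rho> \<Longrightarrow> (\<Sum>z\<in>{z. \<rho> < znorm z \<and> znorm z \<le> 2*\<rho>}. f z) \<le> s \<rho>"
    and rec: "\<And>\<rho>. R0 \<le> \<rho> \<Longrightarrow> s \<rho> + b (2*\<rho>) \<le> b \<rho>"
    and bpos: "\<And>\<rho>. R0 \<le> \<rho> \<Longrightarrow> 0 \<le> b \<rho>"
    and \<rho>: "R0 \<le> \<rho>" and F: "finite F" "F \<subseteq> {z. \<rho> < znorm z}"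
  shows "sum f F \<le> b \<rho>"
proof -
  have P: "\<forall>\<rho>. R0 \<le> \<rho> \<longrightarrow> (\<Sum>z\<in>{z. \<rho> < znorm z \<and> znorm z \<le> 2^n*\<rho>}. f z) \<le> b \<rho>" for n
  proof (induction n)
    case 0
    have emp: "{z :: int ^ 'n. \<rho> < znorm z \<and> znorm z \<le> \<rho>} = {}" for \<rho> by auto
    show ?case by (simp add: emp bpos)
  next
    case (Suc n)
    show ?case
    proof (intro allI impI)
      fix \<rho> :: real assume h: "R0 \<le> \<rho>"
      have h0: "0 \<le> \<rho>" using h R0 by simp
      have eq: "{z :: int ^ 'n. \<rho> < znorm z \<and> znorm z \<le> 2^Suc n*\<rho>}
          = {z. \<rho> < znorm z \<and> znorm z \<le> 2*\<rho>} \<union> {z. 2*\<rho> < znorm z \<and> znorm z \<le> 2^n*(2*\<rho>)}"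
      proof -
        have "1 \<le> (2::real)^n" by simp
        then have "2*\<rho> \<le> 2^n*(2*\<rho>)" using h0 by (simp add: mult_le_cancel_right1)
        then have le: "2*\<rho> \<le> 2 * 2^n*\<rho>" by (simp add: algebra_simps)
        show ?thesis using h0 by (auto dest: order_trans[OF _ le])
      qed
      have fin2: "finite {z :: int ^ 'n. 2*\<rho> < znorm z \<and> znorm z \<le> 2^n*(2*\<rho>)}"
        by (rule finite_subset[OF _ ball_card(1)[of "2^n*(2*\<rho>)"]]) (use h0 in auto)
      have "(\<Sum>z\<in>{z. \<rho> < znorm z \<and> znorm z \<le> 2^Suc n*\<rho>}. f z)
          = (\<Sum>z\<in>{z. \<rho> < znorm z \<and> znorm z \<le> 2*\<rho>}. f z) + (\<Sum>z\<in>{z. 2*\<rho> < znorm z \<and> znorm z \<le> 2^n*(2*\<rho>)}. f z)"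
        unfolding eq by (intro sum.union_disjoint shell_split(3) fin2 h0) auto
      also have "\<dots> \<le> s \<rho> + b (2*\<rho>)"
        using Suc.IH[rule_format, of "2*\<rho>"] h h0 sh[OF h] by (intro add_mono) auto
      also have "\<dots> \<le> b \<rho>" using rec[OF h] .
      finally show "(\<Sum>z\<in>{z. \<rho> < znorm z \<and> znorm z \<le> 2^Suc n*\<rho>}. f z) \<le> b \<rho>" .
    qed
  qed
  define M where "M = (\<Sum>z\<in>F. znorm z)"
  have Mz: "znorm z \<le> M" if "z \<in> F" for z
    unfolding M_def using F(1) that by (intro member_le_sum) (auto simp: znorm_nonneg)
  have rp: "0 < \<rho>" using R0 \<rho> by simp
  obtain n where "M / \<rho> < 2^n" using real_arch_pow[of 2 "M / \<rho>"] by auto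
  then have Mn: "M < 2^n * \<rho>" using rp by (simp add: divide_less_eq)
  have sub: "F \<subseteq> {z. \<rho> < znorm z \<and> znorm z \<le> 2^n*\<rho>}" using F(2) Mz Mn by force
  have fin: "finite {z :: int ^ 'n. \<rho> < znorm z \<and> znorm z \<le> 2^n*\<rho>}"
    by (rule finite_subset[OF _ ball_card(1)[of "2^n*\<rho>"]]) (use rp in auto)
  have "sum f F \<le> (\<Sum>z\<in>{z. \<rho> < znorm z \<and> znorm z \<le> 2^n*\<rho>}. f z)"
    by (rule sum_mono2[OF fin sub]) (simp add: f)
  also have "\<dots> \<le> b \<rho>" using P[of n] \<rho> by blast
  finally show ?thesis .
qed


lemma pointwise_bound:
  fixes g :: "int ^ 'n \<Rightarrow> real"
  assumes B: "\<And>F. finite F \<Longrightarrow> F \<subseteq> {z. R < znorm z} \<Longrightarrow> (\<Sum>z\<in>F. (g z)^2) \<le> B"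
    and x: "znorm x \<le> R"
  shows "infsum (\<lambda>z. g z * g (z - x)) UNIV
           \<le> (\<Sum>z\<in>{z. znorm z \<le> 2*R \<and> znorm (z - x) \<le> 2*R}. \<bar>g z\<bar> * \<bar>g (z - x)\<bar>) + B"
proof -
  define S1 where "S1 = {z. znorm z \<le> 2*R \<and> znorm (z - x) \<le> 2*R}"
  have R: "0 \<le> R" using x znorm_nonneg[of x] by linarith
  have S1fin: "finite S1" unfolding S1_def
    by (rule finite_subset[OF _ ball_card(1)[of "2*R"]]) (use R in auto)
  have B0: "0 \<le> B" using B[of "{}"] by simp
  have P0: "0 \<le> (\<Sum>z\<in>S1. \<bar>g z\<bar> * \<bar>g (z - x)\<bar>)" by (intro sum_nonneg) auto
  have fs: "(\<Sum>z\<in>F. g z * g (z - x)) \<le> (\<Sum>z\<in>S1. \<bar>g z\<bar> * \<bar>g (z - x)\<bar>) + B" if F: "finite F" for F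
  proof -
    have far: "F - S1 \<subseteq> {z. R < znorm z}"
    proof
      fix z assume "z \<in> F - S1"
      then have "2*R < znorm z \<or> 2*R < znorm (z - x)" unfolding S1_def by auto
      then show "z \<in> {z. R < znorm z}" using znorm_diff_le[of z x] x R by auto
    qed
    have far2: "(\<lambda>z. z - x) ` (F - S1) \<subseteq> {z. R < znorm z}"
    proof
      fix w assume "w \<in> (\<lambda>z. z - x) ` (F - S1)"
      then obtain z where z: "z \<in> F - S1" "w = z - x" by auto
      then have "2*R < znorm z \<or> 2*R < znorm (z - x)" unfolding S1_def by auto
      then show "w \<in> {z. R < znorm z}" using znorm_le_diff[of z x] x R z(2) by auto
    qed
    have inj: "inj_on (\<lambda>z. z - x) (F - S1)" by (auto simp: inj_on_def)
    have "(\<Sum>z\<in>F. g z * g (z - x)) = (\<Sum>z\<in>F \<inter> S1. g z * g (z - x)) + (\<Sum>z\<in>F - S1. g z * g (z - x))"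
      using F by (simp add: sum.Int_Diff)
    also have "(\<Sum>z\<in>F \<inter> S1. g z * g (z - x)) \<le> (\<Sum>z\<in>F \<inter> S1. \<bar>g z\<bar> * \<bar>g (z - x)\<bar>)"
      by (intro sum_mono) (metis abs_ge_self abs_mult)
    also have "\<dots> \<le> (\<Sum>z\<in>S1. \<bar>g z\<bar> * \<bar>g (z - x)\<bar>)"
      by (intro sum_mono2 S1fin) auto
    also have "(\<Sum>z\<in>F - S1. g z * g (z - x)) \<le> (\<Sum>z\<in>F - S1. ((g z)^2 + (g (z - x))^2) / 2)"
    proof (intro sum_mono)
      fix z
      have "0 \<le> (g z - g (z - x))^2" by simp
      then show "g z * g (z - x) \<le> ((g z)^2 + (g (z - x))^2) / 2" by (simp add: power2_eq_square algebra_simps)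
    qed
    also have "\<dots> = (\<Sum>z\<in>F - S1. (g z)^2) / 2 + (\<Sum>z\<in>F - S1. (g (z - x))^2) / 2"
      by (simp add: sum_divide_distrib[symmetric] sum.distrib add_divide_distrib)
    also have "(\<Sum>z\<in>F - S1. (g (z - x))^2) = (\<Sum>w\<in>(\<lambda>z. z - x) ` (F - S1). (g w)^2)"
      by (simp add: sum.reindex[OF inj])
    also have "(\<Sum>z\<in>F - S1. (g z)^2) / 2 + (\<Sum>w\<in>(\<lambda>z. z - x) ` (F - S1). (g w)^2) / 2 \<le> B/2 + B/2"
      using B[OF _ far] B[OF _ far2] F by (intro add_mono divide_right_mono) auto
    finally show ?thesis by simp
  qed
  show ?thesis
  proof (cases "(\<lambda>z. g z * g (z - x)) summable_on UNIV")
    case True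
    then show ?thesis unfolding S1_def[symmetric] using fs by (intro infsum_le_finite_sums) auto
  next
    case False
    then show ?thesis unfolding S1_def[symmetric] using infsum_not_exists[OF False] P0 B0 by simp
  qed
qed

lemma double_bound:
  fixes a :: "int ^ 'n \<Rightarrow> real"
  assumes a: "\<And>z. 0 \<le> a z" and R: "0 \<le> R"
  shows "(\<Sum>x\<in>{x. znorm x \<le> R}. \<Sum>z\<in>{z. znorm z \<le> 2*R \<and> znorm (z - x) \<le> 2*R}. a z * a (z - x))
          \<le> (\<Sum>z\<in>{z. znorm z \<le> 2*R}. a z)^2"
proof -
  define X where "X = {x :: int ^ 'n. znorm x \<le> R}"
  define S where "S = (\<lambda>x. {z :: int ^ 'n. znorm z \<le> 2*R \<and> znorm (z - x) \<le> 2*R})"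
  define D where "D = {z :: int ^ 'n. znorm z \<le> 2*R}"
  have Xf: "finite X" unfolding X_def using ball_card(1) R .
  have Df: "finite D" unfolding D_def using R by (intro ball_card(1)) simp
  have Sf: "finite (S x)" for x unfolding S_def
    by (rule finite_subset[OF _ Df]) (auto simp: D_def)
  have "(\<Sum>x\<in>X. \<Sum>z\<in>S x. a z * a (z - x)) = (\<Sum>p\<in>Sigma X S. a (snd p) * a (snd p - fst p))"
    using Xf Sf by (simp add: sum.Sigma split_def)
  also have "\<dots> = (\<Sum>q\<in>(\<lambda>p. (snd p, snd p - fst p)) ` Sigma X S. a (fst q) * a (snd q))"
    by (subst sum.reindex) (auto simp: inj_on_def)
  also have "\<dots> \<le> (\<Sum>q\<in>D \<times> D. a (fst q) * a (snd q))"
    using Df by (intro sum_mono2) (auto simp: S_def D_def a)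
  also have "\<dots> = (\<Sum>z\<in>D. a z) * (\<Sum>w\<in>D. a w)"
    by (simp add: sum_product sum.cartesian_product split_def)
  finally show ?thesis by (simp add: X_def S_def D_def power2_eq_square)
qed


definition phi :: "real \<Rightarrow> real" where
  "phi u = (if u \<le> 1 then 4/3 * u^2 else 4/3 + 2 * ln u)"

lemma ln2_ge: "1/2 \<le> ln (2::real)"
  using ln_le_minus_one[of "1/2::real"] by (simp add: ln_div)

lemma phi_nonneg: "0 \<le> phi u"
  unfolding phi_def by auto

lemma phi_le: assumes "0 \<le> u" shows "phi u \<le> 4 * max 1 (ln u)"
proof (cases "u \<le> 1")
  case True
  then have "u^2 \<le> 1" using assms by (simp add: power_le_one)
  then show ?thesis using True unfolding phi_def by simp
next
  case False
  then have "0 \<le> ln u" by simp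
  then show ?thesis using False unfolding phi_def by (simp add: max_def)
qed

lemma phi_rec:
  assumes u: "0 \<le> u"
  shows "(min 1 u)^2 + phi (u/2) \<le> phi u"
proof (cases "u \<le> 1")
  case True
  then show ?thesis unfolding phi_def by (simp add: power_divide min_def)
next
  case False
  show ?thesis
  proof (cases "u \<le> 2")
    case True
    have up: "0 < u" using False by simp
    have l: "1 - 1/u \<le> ln u"
      using ln_le_minus_one[of "1/u"] up by (simp add: ln_div)
    have "u^3 - 7*u + 6 \<le> 0"
    proof -
      have "u^3 - 7*u + 6 = (u - 1) * ((u - 2) * (u + 3))" by (simp add: algebra_simps power3_eq_cube)
      moreover have "(u - 2) * (u + 3) \<le> 0" using True False by (intro mult_nonpos_nonneg) auto
      moreover have "0 \<le> u - 1" using False by simp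
      ultimately show ?thesis by (simp add: mult_nonneg_nonpos)
    qed
    then have "1 + 4/3*(u/2)^2 \<le> 4/3 + 2*(1 - 1/u)"
      using up by (simp add: field_simps power2_eq_square power3_eq_cube)
    moreover have "(min 1 u)^2 = 1" using False by (simp add: min_def)
    moreover have "phi (u/2) = 4/3*(u/2)^2" using True unfolding phi_def by simp
    moreover have "phi u = 4/3 + 2 * ln u" using False unfolding phi_def by simp
    ultimately show ?thesis using l by (metis (no_types, lifting) add_le_cancel_left mult_le_cancel_left_pos order.trans zero_less_numeral)
  next
    case False2: False
    have "ln (u/2) = ln u - ln 2" using False by (simp add: ln_div)
    moreover have "(min 1 u)^2 = 1" using False by (simp add: min_def)
    moreover have "phi (u/2) = 4/3 + 2 * ln (u/2)" using False2 unfolding phi_def by simp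
    moreover have "phi u = 4/3 + 2 * ln u" using False unfolding phi_def by simp
    ultimately show ?thesis using ln2_ge by linarith
  qed
qed

lemma combine:
  fixes g :: "int ^ 'n \<Rightarrow> real"
  assumes B: "\<And>F. finite F \<Longrightarrow> F \<subseteq> {z. R < znorm z} \<Longrightarrow> (\<Sum>z\<in>F. (g z)^2) \<le> B"
    and R: "0 \<le> R"
  shows "(\<Sum>x\<in>{x. znorm x \<le> R}. infsum (\<lambda>z. g z * g (z - x)) UNIV)
          \<le> (\<Sum>z\<in>{z. znorm z \<le> 2*R}. \<bar>g z\<bar>)^2 + real (card {x :: int ^ 'n. znorm x \<le> R}) * B"
proof -
  have "(\<Sum>x\<in>{x. znorm x \<le> R}. infsum (\<lambda>z. g z * g (z - x)) UNIV)
       \<le> (\<Sum>x\<in>{x. znorm x \<le> R}. (\<Sum>z\<in>{z. znorm z \<le> 2*R \<and> znorm (z - x) \<le> 2*R}. \<bar>g z\<bar> * \<bar>g (z - x)\<bar>) + B)"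
    by (intro sum_mono pointwise_bound[OF B]) auto
  also have "\<dots> = (\<Sum>x\<in>{x. znorm x \<le> R}. \<Sum>z\<in>{z. znorm z \<le> 2*R \<and> znorm (z - x) \<le> 2*R}. \<bar>g z\<bar> * \<bar>g (z - x)\<bar>)
       + real (card {x :: int ^ 'n. znorm x \<le> R}) * B"
    by (simp add: sum.distrib)
  also have "\<dots> \<le> (\<Sum>z\<in>{z. znorm z \<le> 2*R}. \<bar>g z\<bar>)^2 + real (card {x :: int ^ 'n. znorm x \<le> R}) * B"
    using double_bound[of "\<lambda>z. \<bar>g z\<bar>" R] R by simp
  finally show ?thesis .
qed


theorem lemma2p10:
  fixes h :: "real \<Rightarrow> int ^ 'n \<Rightarrow> real"
  assumes "CARD('n) \<ge> 2"
    and "\<exists>C R0. \<forall>T>0. \<forall>R\<ge>R0.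
           (\<Sum>z\<in>{z. R < znorm z \<and> znorm z \<le> 2 * R}. (h T z)^2)
             \<le> C * (if CARD('n) = 2 then (min 1 (sqrt T / R))^2
                    else R powr (2 - real CARD('n)))"
    and "\<forall>R. \<exists>C. \<forall>T>0. (\<Sum>z\<in>{z. znorm z \<le> R}. (h T z)^2) \<le> C"
  shows "\<exists>C R0. \<forall>T>0. \<forall>R\<ge>R0.
           (\<Sum>x\<in>{x. znorm x \<le> R}. infsum (\<lambda>z. h T z * h T (z - x)) UNIV)
             \<le> C * (if CARD('n) = 2 then R^2 * max 1 (ln (sqrt T / R)) else R^2)"
proof -
  define d where "d = CARD('n)"
  have d2: "2 \<le> d" using assms(1) d_def by simp
  obtain C1 R0 where H2: "\<And>T R. 0 < T \<Longrightarrow> R0 \<le> R \<Longrightarrow>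
      (\<Sum>z\<in>{z. R < znorm z \<and> znorm z \<le> 2 * R}. (h T z)^2)
        \<le> C1 * (if d = 2 then (min 1 (sqrt T / R))^2 else R powr (2 - real d))"
    using assms(2) unfolding d_def by blast
  define R1 where "R1 = max R0 1"
  define C where "C = max C1 0"
  have R1: "1 \<le> R1" "R0 \<le> R1" unfolding R1_def by auto
  have C0: "0 \<le> C" unfolding C_def by simp
  have shell2: "(\<Sum>z\<in>{z. R < znorm z \<and> znorm z \<le> 2 * R}. (h T z)^2)
        \<le> C * (if d = 2 then (min 1 (sqrt T / R))^2 else R powr (2 - real d))"
    if T: "0 < T" and R: "R1 \<le> R" for T R
  proof -
    have "0 \<le> (if d = 2 then (min 1 (sqrt T / R))^2 else R powr (2 - real d))" by simp
    then have "C1 * (if d = 2 then (min 1 (sqrt T / R))^2 else R powr (2 - real d))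
        \<le> C * (if d = 2 then (min 1 (sqrt T / R))^2 else R powr (2 - real d))"
      unfolding C_def by (intro mult_right_mono) auto
    then show ?thesis using H2[OF T, of R] R R1(2) by linarith
  qed
  have shellp: "(\<Sum>z\<in>{z. R < znorm z \<and> znorm z \<le> 2 * R}. (h T z)^2) \<le> C * R powr (2 - real d)"
    if T: "0 < T" and R: "R1 \<le> R" for T R
  proof (cases "d = 2")
    case True
    have Rp: "0 < R" using R R1 by simp
    have "0 \<le> min 1 (sqrt T / R)" using Rp T by simp
    moreover have "min 1 (sqrt T / R) \<le> 1" by simp
    ultimately have "(min 1 (sqrt T / R))^2 \<le> 1" by (simp add: power_le_one)
    also have "1 = R powr (2 - real d)" using True Rp by simp
    finally have "(min 1 (sqrt T / R))^2 \<le> R powr (2 - real d)" .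
    from mult_left_mono[OF this C0] show ?thesis using shell2[OF T R] True by simp
  next
    case False
    then show ?thesis using shell2[OF T R] by simp
  qed
  obtain C3 where H3: "\<And>T. 0 < T \<Longrightarrow> (\<Sum>z\<in>{z. znorm z \<le> 2*R1}. (h T z)^2) \<le> C3"
    using assms(3) by blast
  define N0 where "N0 = real (card {z :: int ^ 'n. znorm z \<le> 2*R1})"
  define A0b where "A0b = sqrt (max C3 0 * N0)"
  define K where "K = sqrt (C * 5^d)"
  have K0: "0 \<le> K" unfolding K_def using C0 by simp
  have A0b0: "0 \<le> A0b" unfolding A0b_def N0_def by simp
  have Ksh: "(\<Sum>z\<in>{z. \<rho> < znorm z \<and> znorm z \<le> 2*\<rho>}. \<bar>h T z\<bar>) \<le> K*\<rho>"
    if T: "0 < T" and \<rho>: "R1 \<le> \<rho>" for T \<rho>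
  proof -
    define Sh where "Sh = {z :: int ^ 'n. \<rho> < znorm z \<and> znorm z \<le> 2*\<rho>}"
    have \<rho>1: "1 \<le> \<rho>" using \<rho> R1 by simp
    have "card Sh \<le> card {z :: int ^ 'n. znorm z \<le> 2*\<rho>}"
      unfolding Sh_def using \<rho>1 by (intro card_mono ball_card(1)) auto
    then have "real (card Sh) \<le> real (card {z :: int ^ 'n. znorm z \<le> 2*\<rho>})" by simp
    also have "\<dots> \<le> (2*(2*\<rho>)+1) ^ d"
      using ball_card(2)[of "2*\<rho>", where 'n='n] \<rho>1 unfolding d_def by simp
    also have "\<dots> \<le> (5*\<rho>)^d" using \<rho>1 by (intro power_mono) auto
    finally have cS: "real (card Sh) \<le> (5*\<rho>)^d" .
    have "(\<Sum>z\<in>Sh. \<bar>h T z\<bar>)^2 \<le> (\<Sum>z\<in>Sh. \<bar>h T z\<bar>^2) * real (card Sh)"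
      by (rule sum_squared_le_sum_of_squares)
    also have "\<dots> = (\<Sum>z\<in>Sh. (h T z)^2) * real (card Sh)" by simp
    also have "\<dots> \<le> (C * \<rho> powr (2 - real d)) * (5*\<rho>)^d"
      using shellp[OF T \<rho>] cS C0 unfolding Sh_def
      by (intro mult_mono) (auto intro: sum_nonneg)
    also have "\<dots> = C * 5^d * (\<rho> powr (2 - real d) * \<rho> powr (real d))"
      using \<rho>1 by (simp add: powr_realpow power_mult_distrib)
    also have "\<rho> powr (2 - real d) * \<rho> powr (real d) = \<rho>^2"
      using \<rho>1 by (simp add: powr_add[symmetric])
    finally have "(\<Sum>z\<in>Sh. \<bar>h T z\<bar>)^2 \<le> C * 5^d * \<rho>^2" .
    then have "(\<Sum>z\<in>Sh. \<bar>h T z\<bar>) \<le> sqrt (C * 5^d * \<rho>^2)"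
      by (intro real_le_rsqrt)
    also have "\<dots> = K * \<rho>" unfolding K_def using \<rho>1 by (simp add: real_sqrt_mult)
    finally show ?thesis unfolding Sh_def .
  qed
  have A0: "(\<Sum>z\<in>{z. znorm z \<le> 2*R1}. \<bar>h T z\<bar>) \<le> A0b" if T: "0 < T" for T
  proof -
    have "(\<Sum>z\<in>{z. znorm z \<le> 2*R1}. \<bar>h T z\<bar>)^2 \<le> (\<Sum>z\<in>{z. znorm z \<le> 2*R1}. \<bar>h T z\<bar>^2) * N0"
      unfolding N0_def by (rule sum_squared_le_sum_of_squares)
    also have "\<dots> \<le> max C3 0 * N0"
      using H3[OF T] unfolding N0_def by (intro mult_right_mono) auto
    finally show ?thesis unfolding A0b_def by (intro real_le_rsqrt)
  qed
  have Abound: "(\<Sum>z\<in>{z. znorm z \<le> 2*R}. \<bar>h T z\<bar>) \<le> (4*K + A0b) * R"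
    if T: "0 < T" and R: "R1 \<le> R" for T R
  proof -
    have "(\<Sum>z\<in>{z. znorm z \<le> 2*R}. \<bar>h T z\<bar>) \<le> 2*K*(2*R) + (\<Sum>z\<in>{z. znorm z \<le> 2*R1}. \<bar>h T z\<bar>)"
      using R1 R by (intro ball_sum_bound[OF _ K0 _ Ksh[OF T]]) auto
    also have "\<dots> \<le> 4*K*R + A0b" using A0[OF T] by simp
    also have "\<dots> \<le> (4*K + A0b) * R"
    proof -
      have "A0b \<le> A0b * R" using A0b0 R R1 by (simp add: mult_le_cancel_left1)
      then show ?thesis by (simp add: algebra_simps)
    qed
    finally show ?thesis .
  qed
  define Ctot where "Ctot = (4*K + A0b)^2 + (2*3^d + 48)*C"
  show ?thesis
  proof (rule exI[of _ Ctot], rule exI[of _ R1], intro allI impI)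
    fix T R :: real assume T: "0 < T" and R: "R1 \<le> R"
    have R1': "1 \<le> R" using R R1 by simp
    have Aq: "(\<Sum>z\<in>{z. znorm z \<le> 2*R}. \<bar>h T z\<bar>)^2 \<le> (4*K + A0b)^2 * R^2"
      using Abound[OF T R] by (simp add: power_mult_distrib[symmetric] power_mono sum_nonneg)
    have cardR: "real (card {x :: int ^ 'n. znorm x \<le> R}) \<le> (3*R)^d"
    proof -
      have "real (card {x :: int ^ 'n. znorm x \<le> R}) \<le> (2*R+1)^d"
        using ball_card(2)[of R] R1' unfolding d_def by simp
      also have "\<dots> \<le> (3*R)^d" using R1' by (intro power_mono) auto
      finally show ?thesis .
    qed
    show "(\<Sum>x\<in>{x. znorm x \<le> R}. infsum (\<lambda>z. h T z * h T (z - x)) UNIV)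
             \<le> Ctot * (if CARD('n) = 2 then R^2 * max 1 (ln (sqrt T / R)) else R^2)"
    proof (cases "d = 2")
      case False
      then have d3: "3 \<le> d" using d2 by simp
      have tail: "(\<Sum>z\<in>F. (h T z)^2) \<le> 2*C*R powr (2 - real d)"
        if "finite F" "F \<subseteq> {z. R < znorm z}" for F
      proof (rule tail_bound[of R1 _ "\<lambda>\<rho>. C * \<rho> powr (2 - real d)" "\<lambda>\<rho>. 2*C*\<rho> powr (2 - real d)"])
        show "0 < R1" using R1 by simp
        show "\<And>\<rho>. R1 \<le> \<rho> \<Longrightarrow> (\<Sum>z\<in>{z. \<rho> < znorm z \<and> znorm z \<le> 2*\<rho>}. (h T z)^2) \<le> C * \<rho> powr (2 - real d)"
          using shellp[OF T] .
        show "\<And>\<rho>. R1 \<le> \<rho> \<Longrightarrow> 0 \<le> 2*C*\<rho> powr (2 - real d)" using C0 by simp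
        show "C * \<rho> powr (2 - real d) + 2*C*(2*\<rho>) powr (2 - real d) \<le> 2*C*\<rho> powr (2 - real d)"
          if \<rho>: "R1 \<le> \<rho>" for \<rho>
        proof -
          have "(2::real) powr (2 - real d) \<le> 2 powr (-1)" using d3 by (intro powr_mono) auto
          then have p: "(2::real) powr (2 - real d) \<le> 1/2" by (simp add: powr_minus)
          have "(2*\<rho>) powr (2 - real d) = 2 powr (2 - real d) * \<rho> powr (2 - real d)"
            using \<rho> R1 by (simp add: powr_mult)
          also have "\<dots> \<le> 1/2 * \<rho> powr (2 - real d)" by (intro mult_right_mono p) simp
          finally have "2*C*(2*\<rho>) powr (2 - real d) \<le> 2*C*(1/2 * \<rho> powr (2 - real d))"
            using C0 by (intro mult_left_mono) auto
          then show ?thesis by simp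
        qed
      qed (use that R in auto)
      have "(\<Sum>x\<in>{x. znorm x \<le> R}. infsum (\<lambda>z. h T z * h T (z - x)) UNIV)
          \<le> (\<Sum>z\<in>{z. znorm z \<le> 2*R}. \<bar>h T z\<bar>)^2 + real (card {x :: int ^ 'n. znorm x \<le> R}) * (2*C*R powr (2 - real d))"
        using R1' by (intro combine tail) auto
      also have "\<dots> \<le> (4*K + A0b)^2 * R^2 + (3*R)^d * (2*C*R powr (2 - real d))"
        using Aq cardR C0 by (intro add_mono mult_right_mono) auto
      also have "(3*R)^d * (2*C*R powr (2 - real d)) = 2*3^d*C * (R powr (real d) * R powr (2 - real d))"
        using R1' by (simp add: powr_realpow power_mult_distrib)
      also have "R powr (real d) * R powr (2 - real d) = R^2"
        using R1' by (simp add: powr_add[symmetric])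
      also have "(4*K + A0b)^2 * R^2 + 2*3^d*C * R^2 \<le> Ctot * R^2"
        unfolding Ctot_def using C0 by (simp add: algebra_simps)
      finally show ?thesis using False unfolding d_def by simp
    next
      case True
      define M where "M = max 1 (ln (sqrt T / R))"
      have M1: "1 \<le> M" unfolding M_def by simp
      have tail: "(\<Sum>z\<in>F. (h T z)^2) \<le> C * phi (sqrt T / R)"
        if "finite F" "F \<subseteq> {z. R < znorm z}" for F
      proof (rule tail_bound[of R1 _ "\<lambda>\<rho>. C * (min 1 (sqrt T / \<rho>))^2" "\<lambda>\<rho>. C * phi (sqrt T / \<rho>)"])
        show "0 < R1" using R1 by simp
        show "\<And>\<rho>. R1 \<le> \<rho> \<Longrightarrow> (\<Sum>z\<in>{z. \<rho> < znorm z \<and> znorm z \<le> 2*\<rho>}. (h T z)^2) \<le> C * (min 1 (sqrt T / \<rho>))^2"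
          using shell2[OF T] True by simp
        show "\<And>\<rho>. R1 \<le> \<rho> \<Longrightarrow> 0 \<le> C * phi (sqrt T / \<rho>)" using C0 phi_nonneg by simp
        show "C * (min 1 (sqrt T / \<rho>))^2 + C * phi (sqrt T / (2*\<rho>)) \<le> C * phi (sqrt T / \<rho>)"
          if \<rho>: "R1 \<le> \<rho>" for \<rho>
        proof -
          have e: "sqrt T / (2*\<rho>) = (sqrt T / \<rho>) / 2" by simp
          have "0 \<le> sqrt T / \<rho>" using \<rho> R1 T by simp
          from phi_rec[OF this] have "(min 1 (sqrt T / \<rho>))^2 + phi (sqrt T / (2*\<rho>)) \<le> phi (sqrt T / \<rho>)"
            unfolding e .
          then show ?thesis using C0
            by (metis distrib_left mult_left_mono)
        qed
      qed (use that R in auto)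
      have ph: "phi (sqrt T / R) \<le> 4 * M" unfolding M_def using R1' T by (intro phi_le) simp
      have "(\<Sum>x\<in>{x. znorm x \<le> R}. infsum (\<lambda>z. h T z * h T (z - x)) UNIV)
          \<le> (\<Sum>z\<in>{z. znorm z \<le> 2*R}. \<bar>h T z\<bar>)^2 + real (card {x :: int ^ 'n. znorm x \<le> R}) * (C * phi (sqrt T / R))"
        using R1' by (intro combine tail) auto
      also have "\<dots> \<le> (4*K + A0b)^2 * R^2 + (3*R)^2 * (C * (4 * M))"
        using Aq cardR C0 True ph phi_nonneg
        by (intro add_mono mult_mono mult_left_mono) auto
      also have "\<dots> \<le> (4*K + A0b)^2 * (R^2 * M) + 36 * C * (R^2 * M)"
      proof -
        have X: "0 \<le> (4*K + A0b)^2 * R^2" by simp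
        have "(4*K + A0b)^2 * R^2 * 1 \<le> (4*K + A0b)^2 * R^2 * M" by (rule mult_left_mono[OF M1 X])
        moreover have "(3*R)^2 * (C * (4 * M)) = 36 * C * (R^2 * M)" by (simp add: power_mult_distrib)
        ultimately show ?thesis by (simp add: algebra_simps)
      qed
      also have "\<dots> \<le> Ctot * (R^2 * M)"
      proof -
        have "(36::real) \<le> 2*3^d + 48" by (simp add: add_increasing)
        then have "36 * C \<le> (2*3^d + 48)*C" using C0 by (intro mult_right_mono) auto
        then have "36 * C * (R^2 * M) \<le> (2*3^d + 48)*C * (R^2 * M)"
          using M1 C0 by (intro mult_right_mono) auto
        then show ?thesis unfolding Ctot_def by (simp add: algebra_simps)
      qed
      finally show ?thesis using True unfolding d_def M_def by simp
    qed
  qed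
qed

end
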